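(* Let $f^j(t,x):=\nabla_{A^*}\Gamma^{ji}_{(0,x_0)}(t,x)$ for $t\neq0$ (fixed $x_0\in{\mathbf R}^n$, $i$). For $R>0$, $$\iint_{R<|(t,x)-(0,x_0)|<2R} |f(t,x)|^2 dtdx\lesssim R^{1-n}.$$ In particular, for $1\le p<(n+1)/n$, we have $f\in L_p^{\mathrm{loc}}({\mathbf R}^{1+n})$ and $$\iint_{|(t,x)-(0,x_0)|<R} |f(t,x)|^p dtdx\lesssim R^{1-n(p-1)}.$$
   Context: $n,m\ge1$; $A\in L_\infty({\mathbf R}^n;{\mathcal L}({\mathbf C}^{m(1+n)}))$ is $t$-independent, accretive, and solutions of $\mathrm{div}\,A\nabla u=0$ satisfy Moser local boundedness. $\Gamma_{(t_0,x_0)}(t,x)$, $t\ne t_0$, is constructed via functional calculus: with $D=\begin{bmatrix}0&\mathrm{div}_x\\-\nabla_x&0\end{bmatrix}$, $B=\begin{bmatrix} A_{\perp\perp}^{-1} & -A_{\perp\perp}^{-1}A_{\perp\parallel} \\ A_{\parallel\perp}A_{\perp\perp}^{-1} & A_{\parallel\parallel}- A_{\parallel\perp}A_{\perp\perp}^{-1}A_{\perp\parallel}\end{bmatrix}$, $N=\mathrm{diag}(-I,I)$ and $\widetilde E^\pm_A$ the spectral projections of $BD$, for $t_0>0$ it is the weak solution of $\mathrm{div}\,A^*\nabla\Gamma^i=0$ in ${\mathbf R}^{1+n}_-$ with $\int(\nabla_{A^*}\Gamma^{ji}(0,x),Nv_0^j(x))dx=(e^{-t_0BD}v_0)^i_\perp(x_0)$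 for $v_0\in\widetilde E^+_AL_2$ (analogously for $t_0<0$), extended by translation in $t$. It satisfies $\int_{|x-x_0|>R}|\nabla_{A^*}\Gamma_{(t_0,x_0)}(t,x)|^2dx\lesssim(R+|t-t_0|)^{-n}$. Here $\nabla_{A^*}\Gamma=[\partial_{\nu_{A^*}}\Gamma,\nabla_x\Gamma]^t$. *)

theory Defs
  imports "HOL-Analysis.Analysis"
begin

text \<open>Abstract form of the off-diagonal decay of the conormal gradient of the
fundamental solution with pole at (0, x0): points of R^{1+n} are pairs (t, x)
with t :: real and x :: real^'n; values lie in C^k (k = m(1+n)).\<close>

definition offdiag_decay ::
  "(real \<times> (real^'n) \<Rightarrow> complex^'k) \<Rightarrow> real^'n \<Rightarrow> real \<Rightarrow> bool" where
  "offdiag_decay f x0 C0 \<longleftrightarrow>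
     f \<in> borel_measurable lborel \<and>
     (\<forall>t R. t \<noteq> 0 \<longrightarrow> R > 0 \<longrightarrow>
        (\<integral>\<^sup>+ x\<in>{x. dist x x0 > R}. ennreal ((norm (f (t, x)))\<^sup>2) \<partial>lborel)
          \<le> ennreal (C0 * (R + \<bar>t\<bar>) powr (- real CARD('n))))"

definition Lp_loc :: "real \<Rightarrow> (real \<times> (real^'n) \<Rightarrow> complex^'k) \<Rightarrow> bool" where
  "Lp_loc p f \<longleftrightarrow> f \<in> borel_measurable lborel \<and>
     (\<forall>K. compact K \<longrightarrow> (\<integral>\<^sup>+ z\<in>K. ennreal (norm (f z) powr p) \<partial>lborel) < \<infinity>)"

end

theory Submission
  imports Defs
begin
lemma slice_meas:
  assumes "f \<in> borel_measurable (lborel::(real \<times> (real^'n)) measure)"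
  shows "(\<lambda>x. ennreal ((norm (f (t,x)))\<^sup>2)) \<in> borel_measurable (lborel :: (real^'n) measure)"
proof -
  have "f \<in> borel_measurable (lborel \<Otimes>\<^sub>M lborel)" using assms by (simp add: lborel_prod)
  then have "(\<lambda>x. f (t,x)) \<in> borel_measurable lborel" by (rule measurable_Pair2) simp
  then show ?thesis by measurable
qed

lemma slice_full:
  fixes f :: "real \<times> (real^'n) \<Rightarrow> complex^'k"
  assumes od: "offdiag_decay f x0 C0" and t: "t \<noteq> 0" and C0: "C0 \<ge> 0"
  shows "(\<integral>\<^sup>+x. ennreal ((norm (f (t,x)))\<^sup>2) \<partial>lborel) \<le> ennreal (C0 * \<bar>t\<bar> powr (- real CARD('n)))"
proof -
  define h where "h = (\<lambda>x. ennreal ((norm (f (t,x)))\<^sup>2))"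
  have hm[measurable]: "h \<in> borel_measurable lborel"
    unfolding h_def by (rule slice_meas) (use od in \<open>simp add: offdiag_decay_def\<close>)
  define A where "A = (\<lambda>k::nat. {x::real^'n. dist x x0 > 1 / Suc k})"
  have As: "A k \<in> sets lborel" for k
    unfolding A_def by measurable
  have inc: "incseq A"
    unfolding incseq_def
  proof (intro allI impI subsetI)
    fix m n :: nat and x assume "m \<le> n" "x \<in> A m"
    then have "1 / real (Suc m) < dist x x0" by (simp add: A_def)
    moreover have "1 / real (Suc n) \<le> 1 / real (Suc m)" using \<open>m \<le> n\<close> by (simp add: frac_le)
    ultimately show "x \<in> A n" unfolding A_def by simp
  qed
  have UA: "(\<Union>k. A k) = {x. x \<noteq> x0}"
  proof (intro equalityI subsetI)
    fix x assume "x \<in> (\<Union>k. A k)" then show "x \<in> {x. x \<noteq> x0}" by (auto simp: A_def)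
  next
    fix x assume "x \<in> {x. x \<noteq> x0}" then have "x \<noteq> x0" by simp
    then have "dist x x0 > 0" by simp
    then obtain k where "1 / Suc k < dist x x0" by (metis nat_approx_posE)
    then show "x \<in> (\<Union>k. A k)" by (auto simp: A_def)
  qed
  have "(\<integral>\<^sup>+x. h x \<partial>lborel) = (\<integral>\<^sup>+x. h x * indicator (\<Union>k. A k) x \<partial>lborel)"
    by (rule nn_integral_cong_AE) (use AE_lborel_singleton[of x0] in \<open>auto simp: UA elim!: eventually_mono\<close>)
  also have "\<dots> = emeasure (density lborel h) (\<Union>k. A k)"
    by (rule emeasure_density[symmetric]) (use As in auto)
  also have "\<dots> = (SUP k. emeasure (density lborel h) (A k))"
    by (rule SUP_emeasure_incseq[symmetric]) (use As inc in auto)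
  also have "\<dots> \<le> ennreal (C0 * \<bar>t\<bar> powr (- real CARD('n)))"
  proof (rule SUP_least)
    fix k
    have "emeasure (density lborel h) (A k) = (\<integral>\<^sup>+ x\<in>A k. h x \<partial>lborel)"
      by (rule emeasure_density) (use As in auto)
    also have "\<dots> \<le> ennreal (C0 * (1 / Suc k + \<bar>t\<bar>) powr (- real CARD('n)))"
      using od t unfolding offdiag_decay_def h_def A_def by auto
    also have "\<dots> \<le> ennreal (C0 * \<bar>t\<bar> powr (- real CARD('n)))"
    proof -
      have "(1 / Suc k + \<bar>t\<bar>) powr (- real CARD('n)) \<le> \<bar>t\<bar> powr (- real CARD('n))"
        by (rule powr_mono2') (use t in auto)
      then show ?thesis using C0 by (auto intro!: ennreal_leI mult_left_mono)
    qed
    finally show "emeasure (density lborel h) (A k) \<le> ennreal (C0 * \<bar>t\<bar> powr (- real CARD('n)))" .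
  qed
  finally show ?thesis unfolding h_def .
qed
lemma tonelli:
  fixes h :: "real \<times> (real^'n) \<Rightarrow> ennreal"
  assumes "h \<in> borel_measurable lborel"
  shows "integral\<^sup>N lborel h = (\<integral>\<^sup>+t. \<integral>\<^sup>+x. h (t,x) \<partial>lborel \<partial>lborel)"
proof -
  have "h \<in> borel_measurable (lborel \<Otimes>\<^sub>M lborel)" using assms by (simp add: lborel_prod)
  from lborel.nn_integral_fst[OF this] show ?thesis by (simp add: lborel_prod)
qed

lemma l1: "R > 0 \<Longrightarrow> (R::real) \<le> sqrt a \<Longrightarrow> R^2 \<le> a"
proof -
  assume "R > 0" "R \<le> sqrt a"
  then have "a > 0" by (metis order.strict_trans2 real_sqrt_gt_0_iff)
  have "R^2 \<le> (sqrt a)^2" by (rule power_mono) (use \<open>R>0\<close> \<open>R \<le> sqrt a\<close> in auto)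
  then show ?thesis using \<open>a>0\<close> by simp
qed
lemma l3: "R > 0 \<Longrightarrow> (R::real)^2 \<le> t^2 + d^2 \<Longrightarrow> t^2 + d^2 \<le> (2*R)^2 \<Longrightarrow> d \<ge> 0 \<Longrightarrow> \<bar>t\<bar> \<le> 2*R \<and> (R/2 \<le> \<bar>t\<bar> \<or> d > R/2)"
proof -
  assume R: "R > 0" and a: "R^2 \<le> t^2 + d^2" and b: "t^2 + d^2 \<le> (2*R)^2" and d: "d \<ge> 0"
  have "d^2 \<ge> 0" by simp
  then have "t^2 \<le> (2*R)^2" using b by linarith
  then have "\<bar>t\<bar>^2 \<le> (2*R)^2" by simp
  then have 1: "\<bar>t\<bar> \<le> 2*R" by (rule power2_le_imp_le) (use R in simp)
  have 2: "R/2 \<le> \<bar>t\<bar> \<or> d > R/2"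
  proof (rule ccontr)
    assume "\<not> ?thesis"
    then have "\<bar>t\<bar> < R/2" "d \<le> R/2" by auto
    then have "\<bar>t\<bar>^2 < (R/2)^2" "d^2 \<le> (R/2)^2"
      by (intro power_strict_mono power_mono; simp add: d)+
    then have "t^2 + d^2 < R^2/2" by (simp add: power_divide)
    moreover have "R^2 > 0" using R by simp
    ultimately show False using a by linarith
  qed
  show ?thesis using 1 2 by blast
qed

lemma fst_bm: "(fst :: real \<times> (real^'n) \<Rightarrow> real) \<in> lborel \<rightarrow>\<^sub>M lborel"
  by (simp add: borel_measurable_continuous_onI continuous_on_fst continuous_on_id)
lemma snd_bm: "(snd :: real \<times> (real^'n) \<Rightarrow> real^'n) \<in> lborel \<rightarrow>\<^sub>M lborel"
  by (simp add: borel_measurable_continuous_onI continuous_on_snd continuous_on_id)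
lemma ind_fst: "A \<in> sets lborel \<Longrightarrow> (\<lambda>z::real \<times> (real^'n). indicator A (fst z) :: ennreal) \<in> borel_measurable lborel"
  using measurable_compose[OF fst_bm borel_measurable_indicator] by (simp add: o_def)
lemma ind_snd: "A \<in> sets lborel \<Longrightarrow> (\<lambda>z::real \<times> (real^'n). indicator A (snd z) :: ennreal) \<in> borel_measurable lborel"
  using measurable_compose[OF snd_bm borel_measurable_indicator] by (simp add: o_def)

lemma shell_pointwise:
  fixes t R :: real and x x0 :: "real^'n"
  assumes R: "R > 0" and S: "R \<le> dist (t,x) (0,x0)" "dist (t,x) (0,x0) \<le> 2*R"
  shows "\<bar>t\<bar> \<le> 2*R \<and> (R/2 \<le> \<bar>t\<bar> \<or> dist x x0 > R/2)"
proof -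
  have d: "dist (t,x) (0,x0) = sqrt (t^2 + (dist x x0)^2)" by (simp add: dist_Pair_Pair dist_real_def)
  have "R^2 \<le> t^2 + (dist x x0)^2" using S(1) R d l1 by metis
  moreover have "t^2 + (dist x x0)^2 \<le> (2*R)^2" using S(2) d sqrt_le_D by metis
  ultimately show ?thesis using l3[OF R] by simp
qed

lemma shell_bound:
  fixes f :: "real \<times> (real^'n) \<Rightarrow> complex^'k"
  assumes od: "offdiag_decay f x0 C0" and C0: "C0 \<ge> 0" and R: "R > 0"
  shows "(\<integral>\<^sup>+ z\<in>{z. R \<le> dist z (0,x0) \<and> dist z (0,x0) \<le> 2*R}. ennreal ((norm (f z))\<^sup>2) \<partial>lborel)
          \<le> ennreal (8 * R * C0 * (R/2) powr (- real CARD('n)))"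
proof -
  define g where "g = (\<lambda>z. ennreal ((norm (f z))\<^sup>2))"
  have fm[measurable]: "f \<in> borel_measurable lborel" using od by (simp add: offdiag_decay_def)
  have gm[measurable]: "g \<in> borel_measurable lborel" unfolding g_def by measurable
  define S where "S = {z::real \<times> (real^'n). R \<le> dist z (0,x0) \<and> dist z (0,x0) \<le> 2*R}"
  define T1 where "T1 = {t::real. R/2 \<le> \<bar>t\<bar> \<and> \<bar>t\<bar> \<le> 2*R}"
  define T2 where "T2 = {-2*R..2*R}"
  define X2 where "X2 = {x::real^'n. dist x x0 > R/2}"
  define B where "B = ennreal (C0 * (R/2) powr (- real CARD('n)))"
  have T1s[measurable]: "T1 \<in> sets lborel" unfolding T1_def by measurable
  have T2s[measurable]: "T2 \<in> sets lborel" unfolding T2_def by measurable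
  have X2s[measurable]: "X2 \<in> sets lborel" unfolding X2_def by measurable
  have T12: "T1 \<subseteq> T2" unfolding T1_def T2_def by auto
  have mT2: "emeasure lborel T2 = ennreal (4*R)" unfolding T2_def using R by simp
  have mT1: "emeasure lborel T1 \<le> ennreal (4*R)" using emeasure_mono[OF T12 T2s] mT2 by simp
  have m1: "(\<lambda>z. g z * indicator T1 (fst z)) \<in> borel_measurable lborel"
    using ind_fst[OF T1s] gm by measurable
  have m2: "(\<lambda>z. g z * indicator T2 (fst z) * indicator X2 (snd z)) \<in> borel_measurable lborel"
    using ind_fst[OF T2s] ind_snd[OF X2s] gm by measurable
  have pw: "g z * indicator S z \<le> g z * indicator T1 (fst z) + g z * indicator T2 (fst z) * indicator X2 (snd z)" for z
  proof (cases "z \<in> S")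
    case True
    obtain t x where z: "z = (t,x)" by force
    have "\<bar>t\<bar> \<le> 2*R \<and> (R/2 \<le> \<bar>t\<bar> \<or> dist x x0 > R/2)"
      by (rule shell_pointwise[OF R]) (use True in \<open>auto simp: S_def z\<close>)
    then have tT2: "t \<in> T2" and alt: "t \<in> T1 \<or> x \<in> X2" by (auto simp: T1_def T2_def X2_def abs_le_iff)
    show ?thesis
    proof (cases "t \<in> T1")
      case True then show ?thesis using \<open>z \<in> S\<close> z by (simp add: add_increasing2)
    next
      case False then have "x \<in> X2" using alt by simp
      then show ?thesis using \<open>z \<in> S\<close> z tT2 by simp
    qed
  qed simp
  have I1: "(\<integral>\<^sup>+z. g z * indicator T1 (fst z) \<partial>lborel) \<le> B * ennreal (4*R)"
  proof -
    have "(\<integral>\<^sup>+z. g z * indicator T1 (fst z) \<partial>lborel) = (\<integral>\<^sup>+t. \<integral>\<^sup>+x. g (t,x) * indicator T1 t \<partial>lborel \<partial>lborel)"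
    proof -
      have m: "(\<lambda>z. g z * indicator T1 (fst z)) \<in> borel_measurable lborel"
        using ind_fst[OF T1s] gm by measurable
      show ?thesis using tonelli[OF m] by simp
    qed
    also have "\<dots> = (\<integral>\<^sup>+t. (\<integral>\<^sup>+x. g (t,x) \<partial>lborel) * indicator T1 t \<partial>lborel)"
      by (rule nn_integral_cong) (simp add: nn_integral_multc)
    also have "\<dots> \<le> (\<integral>\<^sup>+t. B * indicator T1 t \<partial>lborel)"
    proof (rule nn_integral_mono)
      fix t
      show "(\<integral>\<^sup>+x. g (t,x) \<partial>lborel) * indicator T1 t \<le> B * indicator T1 t"
      proof (cases "t \<in> T1")
        case True
        then have t0: "t \<noteq> 0" and tR: "R/2 \<le> \<bar>t\<bar>" using R by (auto simp: T1_def)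
        have "(\<integral>\<^sup>+x. g (t,x) \<partial>lborel) \<le> ennreal (C0 * \<bar>t\<bar> powr (- real CARD('n)))"
          unfolding g_def by (rule slice_full[OF od t0 C0])
        also have "\<dots> \<le> B" unfolding B_def
          by (intro ennreal_leI mult_left_mono powr_mono2') (use R tR C0 in auto)
        finally show ?thesis using True by simp
      qed simp
    qed
    also have "\<dots> = B * emeasure lborel T1" using T1s T2s by (simp add: nn_integral_cmult_indicator)
    also have "\<dots> \<le> B * ennreal (4*R)" by (rule mult_left_mono[OF mT1]) simp
    finally show ?thesis .
  qed
  have I2: "(\<integral>\<^sup>+z. g z * indicator T2 (fst z) * indicator X2 (snd z) \<partial>lborel) \<le> B * ennreal (4*R)"
  proof -
    have "(\<integral>\<^sup>+z. g z * indicator T2 (fst z) * indicator X2 (snd z) \<partial>lborel)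
        = (\<integral>\<^sup>+t. \<integral>\<^sup>+x. g (t,x) * indicator T2 t * indicator X2 x \<partial>lborel \<partial>lborel)"
    proof -
      have m: "(\<lambda>z. g z * indicator T2 (fst z) * indicator X2 (snd z)) \<in> borel_measurable lborel"
        using ind_fst[OF T2s] ind_snd[OF X2s] gm by measurable
      show ?thesis using tonelli[OF m] by simp
    qed
    also have "\<dots> = (\<integral>\<^sup>+t. (\<integral>\<^sup>+x. g (t,x) * indicator X2 x \<partial>lborel) * indicator T2 t \<partial>lborel)"
    proof (rule nn_integral_cong)
      fix t
      have gs: "(\<lambda>x. g (t,x)) \<in> borel_measurable lborel" unfolding g_def by (rule slice_meas[OF fm])
      have "(\<integral>\<^sup>+x. g (t,x) * indicator T2 t * indicator X2 x \<partial>lborel) = (\<integral>\<^sup>+x. (g (t,x) * indicator X2 x) * indicator T2 t \<partial>lborel)"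
        by (simp only: mult_ac)
      also have "\<dots> = (\<integral>\<^sup>+x. g (t,x) * indicator X2 x \<partial>lborel) * indicator T2 t"
        by (rule nn_integral_multc) (use gs X2s in measurable)
      finally show "(\<integral>\<^sup>+x. g (t,x) * indicator T2 t * indicator X2 x \<partial>lborel) = (\<integral>\<^sup>+x. g (t,x) * indicator X2 x \<partial>lborel) * indicator T2 t" .
    qed
    also have "\<dots> \<le> (\<integral>\<^sup>+t. B * indicator T2 t \<partial>lborel)"
    proof (rule nn_integral_mono_AE)
      show "AE t in lborel. (\<integral>\<^sup>+x. g (t,x) * indicator X2 x \<partial>lborel) * indicator T2 t \<le> B * indicator T2 t"
        using AE_lborel_singleton[of 0]
      proof (rule eventually_mono)
        fix t :: real assume t0: "t \<noteq> 0"
        show "(\<integral>\<^sup>+x. g (t,x) * indicator X2 x \<partial>lborel) * indicator T2 t \<le> B * indicator T2 t"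
        proof (cases "t \<in> T2")
          case True
          have "(\<integral>\<^sup>+x. g (t,x) * indicator X2 x \<partial>lborel) \<le> ennreal (C0 * (R/2 + \<bar>t\<bar>) powr (- real CARD('n)))"
            using od t0 half_gt_zero[OF R] unfolding g_def X2_def offdiag_decay_def by blast
          also have "\<dots> \<le> B" unfolding B_def
            by (intro ennreal_leI mult_left_mono powr_mono2') (use R C0 in auto)
          finally show ?thesis using True by simp
        qed simp
      qed
    qed
    also have "\<dots> = B * emeasure lborel T2" using T1s T2s by (simp add: nn_integral_cmult_indicator)
    also have "\<dots> = B * ennreal (4*R)" by (simp add: mT2)
    finally show ?thesis .
  qed
  have "(\<integral>\<^sup>+ z. g z * indicator S z \<partial>lborel)
      \<le> (\<integral>\<^sup>+z. g z * indicator T1 (fst z) + g z * indicator T2 (fst z) * indicator X2 (snd z) \<partial>lborel)"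
    by (rule nn_integral_mono) (rule pw)
  also have "\<dots> = (\<integral>\<^sup>+z. g z * indicator T1 (fst z) \<partial>lborel) + (\<integral>\<^sup>+z. g z * indicator T2 (fst z) * indicator X2 (snd z) \<partial>lborel)"
    by (rule nn_integral_add[OF m1 m2])
  also have "\<dots> \<le> B * ennreal (4*R) + B * ennreal (4*R)" using I1 I2 by (rule add_mono)
  also have "\<dots> = ennreal (8 * R * C0 * (R/2) powr (- real CARD('n)))"
    unfolding B_def using R C0 by (simp add: ennreal_mult[symmetric] ennreal_plus[symmetric] algebra_simps del: ennreal_plus)
  finally show ?thesis unfolding g_def S_def .
qed
lemma conv: assumes "R > 0" shows "8 * R * C0 * (R/2) powr (- real n) = (8 * 2 powr real n * C0) * R powr (1 - real n)"
proof -
  have "(R/2) powr (- real n) = R powr (- real n) * 2 powr real n"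
    using assms by (simp add: powr_divide powr_minus divide_simps)
  moreover have "R * R powr (- real n) = R powr (1 - real n)"
    using assms by (simp add: powr_diff powr_minus divide_simps)
  ultimately show ?thesis by (simp add: algebra_simps)
qed
lemma pw: fixes a s p :: real assumes a: "a \<ge> 0" and s: "s > 0" and p: "1 \<le> p" "p \<le> 2"
  shows "a powr p \<le> s powr (p-2) * a^2 + s powr p"
proof (cases "a \<le> s")
  case True
  then have "a powr p \<le> s powr p" using a p by (intro powr_mono2) auto
  moreover have "s powr (p-2) * a^2 \<ge> 0" by simp
  ultimately show ?thesis by linarith
next
  case False
  then have as: "s < a" by simp
  then have a0: "a > 0" using s by simp
  have "a powr p = a powr (p-2) * a powr 2" by (subst powr_add[symmetric]) simp
  also have "\<dots> = a powr (p-2) * a^2" using a0 by (simp add: powr_realpow)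
  also have "\<dots> \<le> s powr (p-2) * a^2"
    by (intro mult_right_mono powr_mono2') (use p s as in auto)
  finally show ?thesis by (smt (verit) powr_ge_zero)
qed
lemma alg: fixes \<rho> p :: real and n :: nat assumes r: "\<rho> > 0"
  shows "(\<rho> powr (- real n)) powr (p-2) * \<rho> powr (1 - real n) = \<rho> powr (1 - real n * (p-1))"
    and "(\<rho> powr (- real n)) powr p * \<rho> ^ (Suc n) = \<rho> powr (1 - real n * (p-1))"
proof -
  show "(\<rho> powr (- real n)) powr (p-2) * \<rho> powr (1 - real n) = \<rho> powr (1 - real n * (p-1))"
    using r by (simp add: powr_powr powr_add[symmetric] algebra_simps)
  have "\<rho> powr real (Suc n) = \<rho> ^ (Suc n)" by (rule powr_realpow[OF r])
  then have "\<rho> ^ (Suc n) = \<rho> powr (real n + 1)" by (simp add: add.commute)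
  then show "(\<rho> powr (- real n)) powr p * \<rho> ^ (Suc n) = \<rho> powr (1 - real n * (p-1))"
    using r by (simp add: powr_powr powr_add[symmetric] algebra_simps)
qed
lemma geo: fixes R e :: real assumes R: "R > 0" shows "(R / 2^m) powr e = R powr e * ((1/2) powr e)^m"
proof -
  have "(R / 2^m) powr e = R powr e * ((1/2)^m) powr e"
  proof -
    have "R / 2^m = R * (1/2)^m" by (simp add: power_one_over)
    then show ?thesis using R by (simp add: powr_mult)
  qed
  also have "(1/2::real)^m = (1/2) powr real m" by (rule powr_realpow[symmetric]) simp
  also have "((1/2::real) powr real m) powr e = ((1/2) powr e)^m"
    by (simp add: powr_powr powr_power mult.commute)
  finally show ?thesis .
qed

lemma shell_bound2:
  fixes f :: "real \<times> (real^'n) \<Rightarrow> complex^'k"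
  assumes od: "offdiag_decay f x0 C0" and C0: "C0 \<ge> 0" and R: "R > 0"
  shows "(\<integral>\<^sup>+ z\<in>{z. R \<le> dist z (0,x0) \<and> dist z (0,x0) \<le> 2*R}. ennreal ((norm (f z))\<^sup>2) \<partial>lborel)
          \<le> ennreal ((8 * 2 powr real CARD('n) * C0) * R powr (1 - real CARD('n)))"
  using shell_bound[OF od C0 R] conv[OF R, of C0 "CARD('n)"] by simp

definition KK :: "real \<Rightarrow> nat \<Rightarrow> real" where
  "KK C0 n = 8 * 2 powr real n * C0 + unit_ball_vol (real (Suc n)) * 2^(Suc n)"

lemma shell_p:
  fixes f :: "real \<times> (real^'n) \<Rightarrow> complex^'k"
  assumes od: "offdiag_decay f x0 C0" and C0: "C0 \<ge> 0" and r: "\<rho> > 0" and p: "1 \<le> p" "p \<le> 2"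
  shows "(\<integral>\<^sup>+ z\<in>{z. \<rho> \<le> dist z (0,x0) \<and> dist z (0,x0) \<le> 2*\<rho>}. ennreal (norm (f z) powr p) \<partial>lborel)
          \<le> ennreal (KK C0 CARD('n) * \<rho> powr (1 - real CARD('n) * (p - 1)))"
proof -
  define n where "n = CARD('n)"
  define S where "S = {z::real \<times> (real^'n). \<rho> \<le> dist z (0,x0) \<and> dist z (0,x0) \<le> 2*\<rho>}"
  define s where "s = \<rho> powr (- real n)"
  define K1 where "K1 = 8 * 2 powr real n * C0"
  define V where "V = unit_ball_vol (real (Suc n))"
  have s0: "s > 0" using r by (simp add: s_def)
  have fm[measurable]: "f \<in> borel_measurable lborel" using od by (simp add: offdiag_decay_def)
  have Ss[measurable]: "S \<in> sets lborel" unfolding S_def by measurable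
  have h1m: "(\<lambda>z. ennreal ((norm (f z))\<^sup>2) * indicator S z) \<in> borel_measurable lborel" by measurable
  have V0: "V \<ge> 0" unfolding V_def by (simp add: unit_ball_vol_nonneg)
  have mS: "emeasure lborel S \<le> ennreal (V * (2*\<rho>)^(Suc n))"
  proof -
    have "S \<subseteq> cball (0,x0) (2*\<rho>)" unfolding S_def by (auto simp: dist_commute)
    then have "emeasure lborel S \<le> emeasure lborel (cball ((0::real),x0) (2*\<rho>))" by (rule emeasure_mono) simp
    also have "\<dots> = ennreal (V * (2*\<rho>)^(Suc n))"
      using r by (subst emeasure_cball) (auto simp: V_def n_def)
    finally show ?thesis .
  qed
  have I2: "(\<integral>\<^sup>+ z. ennreal ((norm (f z))\<^sup>2) * indicator S z \<partial>lborel) \<le> ennreal (K1 * \<rho> powr (1 - real n))"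
    using shell_bound2[OF od C0 r] unfolding S_def K1_def n_def .
  have "(\<integral>\<^sup>+ z. ennreal (norm (f z) powr p) * indicator S z \<partial>lborel)
      \<le> (\<integral>\<^sup>+ z. ennreal (s powr (p-2)) * (ennreal ((norm (f z))\<^sup>2) * indicator S z) + ennreal (s powr p) * indicator S z \<partial>lborel)"
  proof (rule nn_integral_mono)
    fix z
    have "norm (f z) powr p \<le> s powr (p-2) * (norm (f z))^2 + s powr p"
      by (rule pw[OF _ s0 p]) simp
    then have "ennreal (norm (f z) powr p) \<le> ennreal (s powr (p-2)) * ennreal ((norm (f z))\<^sup>2) + ennreal (s powr p)"
      by (simp add: ennreal_mult[symmetric] ennreal_plus[symmetric] del: ennreal_plus ennreal_leI)
    then show "ennreal (norm (f z) powr p) * indicator S z \<le> ennreal (s powr (p-2)) * (ennreal ((norm (f z))\<^sup>2) * indicator S z) + ennreal (s powr p) * indicator S z"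
      by (cases "z \<in> S") auto
  qed
  also have "\<dots> = ennreal (s powr (p-2)) * (\<integral>\<^sup>+ z. ennreal ((norm (f z))\<^sup>2) * indicator S z \<partial>lborel) + ennreal (s powr p) * emeasure lborel S"
  proof -
    have e: "(\<integral>\<^sup>+z. ennreal (s powr p) * indicator S z \<partial>lborel) = ennreal (s powr p) * emeasure lborel S"
      by (rule nn_integral_cmult_indicator[OF Ss])
    have e2: "(\<integral>\<^sup>+z. ennreal (s powr (p-2)) * (ennreal ((norm (f z))\<^sup>2) * indicator S z) \<partial>lborel)
       = ennreal (s powr (p-2)) * (\<integral>\<^sup>+ z. ennreal ((norm (f z))\<^sup>2) * indicator S z \<partial>lborel)"
      by (rule nn_integral_cmult[OF h1m])
    have "(\<integral>\<^sup>+ z. ennreal (s powr (p-2)) * (ennreal ((norm (f z))\<^sup>2) * indicator S z) + ennreal (s powr p) * indicator S z \<partial>lborel)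
      = (\<integral>\<^sup>+z. ennreal (s powr (p-2)) * (ennreal ((norm (f z))\<^sup>2) * indicator S z) \<partial>lborel) + (\<integral>\<^sup>+z. ennreal (s powr p) * indicator S z \<partial>lborel)"
      by (rule nn_integral_add) (use h1m in measurable)
    then show ?thesis by (simp only: e e2)
  qed
  also have "\<dots> \<le> ennreal (s powr (p-2)) * ennreal (K1 * \<rho> powr (1 - real n)) + ennreal (s powr p) * ennreal (V * (2*\<rho>)^(Suc n))"
    by (intro add_mono mult_left_mono I2 mS) auto
  also have "\<dots> = ennreal (s powr (p-2) * (K1 * \<rho> powr (1 - real n)) + s powr p * (V * (2*\<rho>)^(Suc n)))"
    using C0 V0 r by (simp add: ennreal_mult[symmetric] ennreal_plus[symmetric] K1_def del: ennreal_plus)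
  also have "s powr (p-2) * (K1 * \<rho> powr (1 - real n)) + s powr p * (V * (2*\<rho>)^(Suc n))
      = KK C0 CARD('n) * \<rho> powr (1 - real CARD('n) * (p - 1))"
  proof -
    have "s powr (p-2) * (K1 * \<rho> powr (1 - real n)) + s powr p * (V * (2*\<rho>)^(Suc n))
       = K1 * (s powr (p-2) * \<rho> powr (1 - real n)) + V * 2^(Suc n) * (s powr p * \<rho>^(Suc n))"
      by (simp only: power_mult_distrib mult_ac)
    also have "\<dots> = K1 * \<rho> powr (1 - real n * (p-1)) + V * 2^(Suc n) * \<rho> powr (1 - real n * (p-1))"
      unfolding s_def alg[OF r, of n p] ..
    also have "\<dots> = KK C0 n * \<rho> powr (1 - real n * (p - 1))"
      unfolding KK_def K1_def V_def by (simp add: algebra_simps)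
    finally show ?thesis unfolding n_def .
  qed
  finally show ?thesis unfolding S_def .
qed

lemma exists_shell:
  fixes d R :: real assumes d: "0 < d" "d < R"
  shows "\<exists>k. R / 2^(Suc k) \<le> d \<and> d \<le> 2 * (R / 2^(Suc k))"
proof -
  obtain N where N: "R/d < 2^N" using real_arch_pow[of 2 "R/d"] by auto
  define P where "P m = (R / 2^m \<le> d)" for m :: nat
  have "P N" unfolding P_def using N d by (simp add: field_simps)
  define m where "m = (LEAST m. P m)"
  have Pm: "P m" unfolding m_def by (rule LeastI[of P N, OF \<open>P N\<close>])
  have min: "\<not> P j" if "j < m" for j using not_less_Least[OF that[unfolded m_def]] by blast
  have "m \<noteq> 0"
  proof
    assume "m = 0" then show False using Pm d by (simp add: P_def)
  qed
  then obtain k where k: "m = Suc k" by (cases m) auto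
  have "\<not> P k" using min k by simp
  then have "d < R / 2^k" by (simp add: P_def)
  also have "R / 2^k = 2 * (R / 2^(Suc k))" by simp
  finally show ?thesis using Pm k by (auto simp: P_def)
qed

lemma ball_bound:
  fixes f :: "real \<times> (real^'n) \<Rightarrow> complex^'k"
  assumes od: "offdiag_decay f x0 C0" and C0: "C0 \<ge> 0" and R: "R > 0"
    and p: "1 \<le> p" "p < (real CARD('n) + 1) / real CARD('n)"
  shows "(\<integral>\<^sup>+ z\<in>ball (0,x0) R. ennreal (norm (f z) powr p) \<partial>lborel)
     \<le> ennreal (KK C0 CARD('n) * ((1/2) powr (1 - real CARD('n) * (p - 1)) / (1 - (1/2) powr (1 - real CARD('n) * (p - 1))))
               * R powr (1 - real CARD('n) * (p - 1)))"
proof -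
  define n where "n = CARD('n)"
  define e where "e = 1 - real n * (p - 1)"
  define q where "q = (1/2::real) powr e"
  define M where "M = KK C0 n"
  have n1: "real n \<ge> 1" unfolding n_def by (simp add: Suc_leI)
  have pn: "p * real n < real n + 1" using p(2) n1 unfolding n_def by (simp add: field_simps)
  have e0: "e > 0" unfolding e_def using pn by (simp add: algebra_simps)
  have p2: "p \<le> 2"
  proof (rule ccontr)
    assume "\<not> p \<le> 2"
    then have "2 * real n \<le> p * real n" by (intro mult_right_mono) auto
    then show False using pn n1 by linarith
  qed
  have q0: "q > 0" unfolding q_def by simp
  have q1: "q < 1"
  proof -
    have "1 < (2::real) powr e" by (rule gr_one_powr) (use e0 in auto)
    then show ?thesis unfolding q_def by (simp add: powr_divide)
  qed
  have M0: "M \<ge> 0" unfolding M_def KK_def using C0 by (simp add: unit_ball_vol_nonneg)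
  have fm[measurable]: "f \<in> borel_measurable lborel" using od by (simp add: offdiag_decay_def)
  define Sh where "Sh k = {z::real \<times> (real^'n). R / 2^(Suc k) \<le> dist z (0,x0) \<and> dist z (0,x0) \<le> 2 * (R / 2^(Suc k))}" for k
  define h where "h z = ennreal (norm (f z) powr p)" for z
  have hm[measurable]: "h \<in> borel_measurable lborel" unfolding h_def by measurable
  have Shs[measurable]: "Sh k \<in> sets lborel" for k unfolding Sh_def by measurable
  have "(\<integral>\<^sup>+ z. h z * indicator (ball (0,x0) R) z \<partial>lborel) \<le> (\<integral>\<^sup>+ z. (\<Sum>k. h z * indicator (Sh k) z) \<partial>lborel)"
  proof (rule nn_integral_mono_AE)
    show "AE z in lborel. h z * indicator (ball (0,x0) R) z \<le> (\<Sum>k. h z * indicator (Sh k) z)"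
      using AE_lborel_singleton[of "(0::real,x0)"]
    proof (rule eventually_mono)
      fix z :: "real \<times> (real^'n)" assume zc: "z \<noteq> (0, x0)"
      show "h z * indicator (ball (0,x0) R) z \<le> (\<Sum>k. h z * indicator (Sh k) z)"
      proof (cases "z \<in> ball (0,x0) R")
        case True
        then have "0 < dist z (0,x0)" "dist z (0,x0) < R" using zc by (auto simp: dist_commute)
        then obtain k where "z \<in> Sh k" using exists_shell unfolding Sh_def by blast
        then have 1: "h z * indicator (ball (0,x0) R) z = h z * indicator (Sh k) z" using True by simp
        define G where "G j = h z * indicator (Sh j) z" for j
        have "(\<Sum>j\<in>{k}. G j) \<le> (\<Sum>j. G j)" by (rule sum_le_suminf[OF summableI]) auto
        then have "G k \<le> (\<Sum>j. G j)" by simp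
        then show ?thesis using 1 unfolding G_def by simp
      qed simp
    qed
  qed
  also have "\<dots> = (\<Sum>k. \<integral>\<^sup>+ z. h z * indicator (Sh k) z \<partial>lborel)"
    by (rule nn_integral_suminf) measurable
  also have "\<dots> \<le> (\<Sum>k. ennreal (M * R powr e * q^(Suc k)))"
  proof (rule suminf_le[OF _ summableI summableI])
    fix k
    have rk: "R / 2^(Suc k) > 0" using R by simp
    have "(\<integral>\<^sup>+ z. h z * indicator (Sh k) z \<partial>lborel) \<le> ennreal (M * (R / 2^(Suc k)) powr e)"
      using shell_p[OF od C0 rk p(1) p2] unfolding h_def Sh_def M_def e_def n_def by simp
    also have "(R / 2^(Suc k)) powr e = R powr e * q^(Suc k)" unfolding q_def by (rule geo[OF R])
    finally show "(\<integral>\<^sup>+ z. h z * indicator (Sh k) z \<partial>lborel) \<le> ennreal (M * R powr e * q^(Suc k))"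
      by (simp add: mult.assoc)
  qed
  also have "\<dots> = ennreal (M * R powr e * (q / (1 - q)))"
  proof (rule suminf_ennreal_eq)
    show "0 \<le> M * R powr e * q ^ Suc k" for k using M0 q0 by simp
    have "(\<lambda>k. q^k) sums (1 / (1 - q))" by (rule geometric_sums) (use q0 q1 in auto)
    then have "(\<lambda>k. (M * R powr e * q) * q^k) sums ((M * R powr e * q) * (1 / (1 - q)))" by (rule sums_mult)
    then show "(\<lambda>k. M * R powr e * q ^ Suc k) sums (M * R powr e * (q / (1 - q)))"
      by (simp add: mult_ac)
  qed
  finally show ?thesis unfolding h_def M_def q_def e_def n_def by (simp add: mult_ac)
qed

theorem proposition5p1:
  fixes C0 :: real
  assumes "C0 > 0"
  shows "(\<exists>C. \<forall>(f :: real \<times> (real^'n) \<Rightarrow> complex^'k) x0. offdiag_decay f x0 C0 \<longrightarrow>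
            (\<forall>R>0. (\<integral>\<^sup>+ z\<in>{z. R < dist z (0, x0) \<and> dist z (0, x0) < 2 * R}.
                       ennreal ((norm (f z))\<^sup>2) \<partial>lborel)
                    \<le> ennreal (C * R powr (1 - real CARD('n)))))
       \<and> (\<forall>p::real. 1 \<le> p \<and> p < (real CARD('n) + 1) / real CARD('n) \<longrightarrow>
            (\<exists>C. \<forall>(f :: real \<times> (real^'n) \<Rightarrow> complex^'k) x0. offdiag_decay f x0 C0 \<longrightarrow>
               Lp_loc p f \<and>
               (\<forall>R>0. (\<integral>\<^sup>+ z\<in>ball (0, x0) R. ennreal (norm (f z) powr p) \<partial>lborel)
                       \<le> ennreal (C * R powr (1 - real CARD('n) * (p - 1))))))"
proof (intro conjI allI impI)
  have C0: "C0 \<ge> 0" using assms by simp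
  show "\<exists>C. \<forall>(f :: real \<times> (real^'n) \<Rightarrow> complex^'k) x0. offdiag_decay f x0 C0 \<longrightarrow>
            (\<forall>R>0. (\<integral>\<^sup>+ z\<in>{z. R < dist z (0, x0) \<and> dist z (0, x0) < 2 * R}.
                       ennreal ((norm (f z))\<^sup>2) \<partial>lborel)
                    \<le> ennreal (C * R powr (1 - real CARD('n))))"
  proof (intro exI allI impI)
    fix f :: "real \<times> (real^'n) \<Rightarrow> complex^'k" and x0 :: "real^'n" and R :: real
    assume od: "offdiag_decay f x0 C0" and R: "R > 0"
    have "(\<integral>\<^sup>+ z\<in>{z. R < dist z (0, x0) \<and> dist z (0, x0) < 2 * R}. ennreal ((norm (f z))\<^sup>2) \<partial>lborel)
        \<le> (\<integral>\<^sup>+ z\<in>{z. R \<le> dist z (0,x0) \<and> dist z (0,x0) \<le> 2*R}. ennreal ((norm (f z))\<^sup>2) \<partial>lborel)"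
      by (intro nn_integral_mono) (auto simp: indicator_def)
    also have "\<dots> \<le> ennreal ((8 * 2 powr real CARD('n) * C0) * R powr (1 - real CARD('n)))"
      by (rule shell_bound2[OF od C0 R])
    finally show "(\<integral>\<^sup>+ z\<in>{z. R < dist z (0, x0) \<and> dist z (0, x0) < 2 * R}. ennreal ((norm (f z))\<^sup>2) \<partial>lborel)
        \<le> ennreal ((8 * 2 powr real CARD('n) * C0) * R powr (1 - real CARD('n)))" .
  qed
next
  fix p :: real
  assume p: "1 \<le> p \<and> p < (real CARD('n) + 1) / real CARD('n)"
  have C0: "C0 \<ge> 0" using assms by simp
  define e where "e = 1 - real CARD('n) * (p - 1)"
  define C where "C = KK C0 CARD('n) * ((1/2) powr e / (1 - (1/2) powr e))"
  show "\<exists>C. \<forall>(f :: real \<times> (real^'n) \<Rightarrow> complex^'k) x0. offdiag_decay f x0 C0 \<longrightarrow>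
               Lp_loc p f \<and>
               (\<forall>R>0. (\<integral>\<^sup>+ z\<in>ball (0, x0) R. ennreal (norm (f z) powr p) \<partial>lborel)
                       \<le> ennreal (C * R powr (1 - real CARD('n) * (p - 1))))"
  proof (intro exI allI impI conjI)
    fix f :: "real \<times> (real^'n) \<Rightarrow> complex^'k" and x0 :: "real^'n"
    assume od: "offdiag_decay f x0 C0"
    have BB: "(\<integral>\<^sup>+ z\<in>ball (0, x0) R. ennreal (norm (f z) powr p) \<partial>lborel)
                       \<le> ennreal (C * R powr (1 - real CARD('n) * (p - 1)))" if R: "R > 0" for R
      using ball_bound[OF od C0 R conjunct1[OF p] conjunct2[OF p]] unfolding C_def e_def .
    fix R :: real assume "R > 0"
    then show "(\<integral>\<^sup>+ z\<in>ball (0, x0) R. ennreal (norm (f z) powr p) \<partial>lborel)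
                       \<le> ennreal (C * R powr (1 - real CARD('n) * (p - 1)))" by (rule BB)
  next
    fix f :: "real \<times> (real^'n) \<Rightarrow> complex^'k" and x0 :: "real^'n"
    assume od: "offdiag_decay f x0 C0"
    have BB: "(\<integral>\<^sup>+ z\<in>ball (0, x0) R. ennreal (norm (f z) powr p) \<partial>lborel)
                       \<le> ennreal (C * R powr (1 - real CARD('n) * (p - 1)))" if R: "R > 0" for R
      using ball_bound[OF od C0 R conjunct1[OF p] conjunct2[OF p]] unfolding C_def e_def .
    show "Lp_loc p f"
      unfolding Lp_loc_def
    proof (intro conjI allI impI)
      show "f \<in> borel_measurable lborel" using od by (simp add: offdiag_decay_def)
      fix K :: "(real \<times> (real^'n)) set" assume "compact K"
      then have "bounded K" by (rule compact_imp_bounded)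
      then obtain r where r: "r > 0" "K \<subseteq> ball (0,x0) r" using bounded_subset_ballD by blast
      have "(\<integral>\<^sup>+ z\<in>K. ennreal (norm (f z) powr p) \<partial>lborel) \<le> (\<integral>\<^sup>+ z\<in>ball (0,x0) r. ennreal (norm (f z) powr p) \<partial>lborel)"
        using r(2) by (intro nn_integral_mono) (auto simp: indicator_def)
      also have "\<dots> \<le> ennreal (C * r powr (1 - real CARD('n) * (p - 1)))" by (rule BB[OF r(1)])
      also have "\<dots> < \<infinity>" by simp
      finally show "(\<integral>\<^sup>+ z\<in>K. ennreal (norm (f z) powr p) \<partial>lborel) < \<infinity>" .
    qed
  qed
qed
end
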